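(* Let $n\ge2$, $a\ge\sqrt{n-1}$, $f(x)=a|x^{(1)}|+\sum_{i=2}^n x^{(i)}$ on $\mathbb{R}^n$, $0<c_1<c_2<1$, and $\tau=c_1+\frac{(n-1)(c_1-1)}{a^2}$. Let $x_0\in\mathbb{R}^n$ with $x_0^{(1)}\ne0$, and define iteratively $d_k=-\nabla f(x_k)$, $$t_k=\frac{2|x_k^{(1)}|}{(\tau+1)a},\qquad x_{k+1}=x_k+t_kd_k.$$ Then (1) $A(t_k)$ and $W(t_k)$ both hold for every $k$; and (2) if $\tau\le0$, then $f(x_k)$ is unbounded below as $k\to\infty$.
   Context: $x^{(i)}$ is the $i$-th coordinate. Note $-1<\tau<1$. At iteration $k$, the Armijo condition is $A(t)$: $f(x_k+td_k)\le f(x_k)+c_1t\nabla f(x_k)^Td_k$; the Wolfe condition is $W(t)$: $f$ is differentiable at $x_k+td_k$ and $\nabla f(x_k+td_k)^Td_k\ge c_2\nabla f(x_k)^Td_k$. *)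

theory Defs
  imports "HOL-Analysis.Analysis"
begin

text \<open>Gradient of a real-valued function on a Euclidean space (meaningful where f is differentiable).\<close>
definition grad :: "('a::real_inner \<Rightarrow> real) \<Rightarrow> 'a \<Rightarrow> 'a" where
  "grad f x = (THE g. (f has_derivative (\<lambda>h. g \<bullet> h)) (at x))"

definition armijo :: "('a::real_inner \<Rightarrow> real) \<Rightarrow> real \<Rightarrow> 'a \<Rightarrow> 'a \<Rightarrow> real \<Rightarrow> bool" where
  "armijo f c1 x d t \<longleftrightarrow> f (x + t *\<^sub>R d) \<le> f x + c1 * t * (grad f x \<bullet> d)"

definition wolfe :: "('a::real_inner \<Rightarrow> real) \<Rightarrow> real \<Rightarrow> 'a \<Rightarrow> 'a \<Rightarrow> real \<Rightarrow> bool" where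
  "wolfe f c2 x d t \<longleftrightarrow> f differentiable (at (x + t *\<^sub>R d)) \<and>
     grad f (x + t *\<^sub>R d) \<bullet> d \<ge> c2 * (grad f x \<bullet> d)"

end

theory Submission
  imports Defs "HOL-Analysis.Analysis"
begin

lemma inner_G:
  fixes i1 :: "'n::finite" and h :: "real^'n"
  shows "(\<chi> i. if i = i1 then c else 1) \<bullet> h = c * h$i1 + (\<Sum>i\<in>UNIV-{i1}. h$i)"
proof -
  have "(\<chi> i. if i = i1 then c else 1) \<bullet> h = (\<Sum>i\<in>UNIV. (if i = i1 then c else 1) * h$i)"
    by (simp add: inner_vec_def)
  also have "\<dots> = c * h$i1 + (\<Sum>i\<in>UNIV-{i1}. (if i = i1 then c else 1) * h$i)"
    by (simp add: sum.remove[of UNIV i1])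
  also have "(\<Sum>i\<in>UNIV-{i1}. (if i = i1 then c else 1) * h$i) = (\<Sum>i\<in>UNIV-{i1}. h$i)"
    by (rule sum.cong) auto
  finally show ?thesis .
qed

lemma grad_F:
  fixes a :: real and i1 :: "'n::finite" and y :: "real^'n"
  assumes y: "y$i1 \<noteq> 0"
  shows "((\<lambda>y. a*\<bar>y$i1\<bar> + (\<Sum>i\<in>UNIV-{i1}. y$i)) has_derivative
          (\<lambda>h. (\<chi> i. if i = i1 then a * sgn(y$i1) else 1) \<bullet> h)) (at y)"
    and "grad (\<lambda>y. a*\<bar>y$i1\<bar> + (\<Sum>i\<in>UNIV-{i1}. y$i)) y = (\<chi> i. if i = i1 then a * sgn(y$i1) else 1)"
    and "(\<lambda>y. a*\<bar>y$i1\<bar> + (\<Sum>i\<in>UNIV-{i1}. y$i)) differentiable at y"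
proof -
  define s where "s = sgn (y$i1)"
  define F where "F = (\<lambda>y::real^'n. a*\<bar>y$i1\<bar> + (\<Sum>i\<in>UNIV-{i1}. y$i))"
  define G where "G = (\<chi> i. if i = i1 then a * s else (1::real))"
  have lin: "bounded_linear (\<lambda>h. G \<bullet> h)" by (rule bounded_linear_inner_right)
  have d1: "((\<lambda>h. G \<bullet> h) has_derivative (\<lambda>h. G \<bullet> h)) (at y)"
    using lin by (rule bounded_linear_imp_has_derivative)
  define S where "S = {z::real^'n. 0 < s * z$i1}"
  have oS: "open S" unfolding S_def
    by (intro open_Collect_less continuous_intros continuous_on_component) 
  have yS: "y \<in> S" using y unfolding S_def s_def by (cases "y$i1 > 0") (auto simp: sgn_if)
  have eq: "G \<bullet> z = F z" if "z \<in> S" for z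
  proof -
    have "\<bar>z$i1\<bar> = s * z$i1" using that y unfolding S_def s_def
      by (cases "y$i1 > 0") (auto simp: sgn_if)
    then show ?thesis unfolding G_def F_def inner_G by simp
  qed
  have D: "(F has_derivative (\<lambda>h. G \<bullet> h)) (at y)"
    by (rule has_derivative_transform_within_open[OF d1 oS yS eq])
  then show "((\<lambda>y. a*\<bar>y$i1\<bar> + (\<Sum>i\<in>UNIV-{i1}. y$i)) has_derivative
          (\<lambda>h. (\<chi> i. if i = i1 then a * sgn(y$i1) else 1) \<bullet> h)) (at y)"
    unfolding F_def G_def s_def .
  then show "(\<lambda>y. a*\<bar>y$i1\<bar> + (\<Sum>i\<in>UNIV-{i1}. y$i)) differentiable at y"
    unfolding differentiable_def by blast
  have "grad F y = G"
    unfolding grad_def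
  proof (rule the_equality)
    show "(F has_derivative (\<lambda>h. G \<bullet> h)) (at y)" by (rule D)
    fix g assume "(F has_derivative (\<lambda>h. g \<bullet> h)) (at y)"
    then have "(\<lambda>h. g \<bullet> h) = (\<lambda>h. G \<bullet> h)" using has_derivative_unique D by blast
    then have "g \<bullet> (g - G) = G \<bullet> (g - G)" by metis
    then have "(g - G) \<bullet> (g - G) = 0" by (simp add: inner_diff_left)
    then show "g = G" by simp
  qed
  then show "grad (\<lambda>y. a*\<bar>y$i1\<bar> + (\<Sum>i\<in>UNIV-{i1}. y$i)) y = (\<chi> i. if i = i1 then a * sgn(y$i1) else 1)"
    unfolding F_def G_def s_def .
qed
lemma sum_one_minus:
  fixes i1 :: "'n::finite"
  shows "(\<Sum>i\<in>UNIV-{i1}. (1::real)) = real CARD('n) - 1"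
proof -
  have "CARD('n) \<ge> 1" by (simp add: Suc_leI)
  then show ?thesis by (simp add: card_Diff_singleton of_nat_diff)
qed

theorem theorem2:
  fixes a c1 c2 tau :: real
    and i1 :: "'n::finite"
    and f :: "real^'n \<Rightarrow> real"
    and x d :: "nat \<Rightarrow> real^'n"
    and t :: "nat \<Rightarrow> real"
    and x0 :: "real^'n"
  assumes n2: "CARD('n) \<ge> 2"
    and a_ge: "a \<ge> sqrt (real CARD('n) - 1)"
    and f_def: "f = (\<lambda>y. a * \<bar>y $ i1\<bar> + (\<Sum>i\<in>UNIV - {i1}. y $ i))"
    and c: "0 < c1" "c1 < c2" "c2 < 1"
    and tau_def: "tau = c1 + (real CARD('n) - 1) * (c1 - 1) / a\<^sup>2"
    and x0_nz: "x0 $ i1 \<noteq> 0"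
    and x_0: "x 0 = x0"
    and d_def: "\<And>k. d k = - grad f (x k)"
    and t_def: "\<And>k. t k = 2 * \<bar>x k $ i1\<bar> / ((tau + 1) * a)"
    and x_Suc: "\<And>k. x (Suc k) = x k + t k *\<^sub>R d k"
  shows "(\<forall>k. armijo f c1 (x k) (d k) (t k) \<and> wolfe f c2 (x k) (d k) (t k))
         \<and> (tau \<le> 0 \<longrightarrow> \<not> bdd_below (range (\<lambda>k. f (x k))))"
proof -
  define N where "N = real CARD('n) - 1"
  have N1: "N \<ge> 1" using n2 unfolding N_def by simp
  have sN: "sqrt N \<ge> 1" using N1 by simp
  have apos: "a > 0" using a_ge sN unfolding N_def by linarith
  have aN: "a\<^sup>2 \<ge> N"
  proof -
    have "(sqrt N)\<^sup>2 \<le> a\<^sup>2" using a_ge sN unfolding N_def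
      by (intro power_mono) auto
    then show ?thesis using N1 by simp
  qed
  have tau_a: "tau * a\<^sup>2 = c1 * a\<^sup>2 + N * (c1 - 1)"
    using apos unfolding tau_def N_def by (simp add: field_simps)
  have tau_lt: "tau < 1"
  proof -
    have "N * (c1 - 1) / a\<^sup>2 \<le> 0" using N1 c apos by (intro divide_nonpos_pos mult_nonneg_nonpos) auto
    then show ?thesis using c unfolding tau_def N_def by linarith
  qed
  have tau_gt: "tau + 1 > 0"
  proof -
    have "N * (1 - c1) \<le> a\<^sup>2 * (1 - c1)" using aN c by (intro mult_right_mono) auto
    then have "N * (c1 - 1) / a\<^sup>2 \<ge> c1 - 1" using apos by (simp add: field_simps)
    then show ?thesis using c unfolding tau_def N_def by linarith
  qed
  define r where "r = (tau - 1) / (tau + 1)"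
  have rneg: "r < 0" unfolding r_def using tau_lt tau_gt by (simp add: divide_neg_pos)
  have absr: "\<bar>r\<bar> = (1 - tau) / (1 + tau)" unfolding r_def using tau_lt tau_gt
    by (simp add: abs_div_pos)
  define G where "G = (\<lambda>y::real^'n. (\<chi> i. if i = i1 then a * sgn (y$i1) else (1::real)))"
  have gradf: "grad f y = G y" "f differentiable at y" if "y$i1 \<noteq> 0" for y
    using grad_F[OF that, of a] unfolding f_def G_def by auto
  have GG: "G y \<bullet> G z = a\<^sup>2 * sgn (y$i1) * sgn (z$i1) + N" for y z
    unfolding G_def inner_G using sum_one_minus[of i1] unfolding N_def
    by (simp add: power2_eq_square)
  have dcomp: "d k $ i = (if i = i1 then - a * sgn (x k $ i1) else - 1)" if "x k $ i1 \<noteq> 0" for k i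
    using d_def[of k] gradf[OF that] unfolding G_def by simp
  have stepx: "x (Suc k) $ i1 = r * x k $ i1" if nz: "x k $ i1 \<noteq> 0" for k
  proof -
    have "x (Suc k) $ i1 = x k $ i1 - t k * a * sgn (x k $ i1)"
      using x_Suc[of k] dcomp[OF nz, of i1] by simp
    also have "t k * a * sgn (x k $ i1) = 2 * x k $ i1 / (tau + 1)"
    proof -
      have "t k * a * sgn (x k $ i1) = 2 * (\<bar>x k $ i1\<bar> * sgn (x k $ i1)) * a / ((tau + 1) * a)"
        unfolding t_def by simp
      also have "\<dots> = 2 * x k $ i1 / (tau + 1)" using apos tau_gt by (simp add: abs_mult_sgn)
      finally show ?thesis .
    qed
    finally show ?thesis unfolding r_def using tau_gt by (simp add: field_simps)
  qed
  have nz: "x k $ i1 \<noteq> 0" for k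
  proof (induction k)
    case 0 then show ?case using x_0 x0_nz by simp
  next
    case (Suc k) then show ?case using stepx[OF Suc] rneg by simp
  qed
  have fstep: "f (x (Suc k)) = f (x k) + c1 * t k * (grad f (x k) \<bullet> d k)"
    and wolfek: "wolfe f c2 (x k) (d k) (t k)" for k
  proof -
    let ?v = "x k $ i1"
    have h1: "a * \<bar>r * ?v\<bar> = a * \<bar>?v\<bar> - tau * a\<^sup>2 * t k"
    proof -
      define w where "w = \<bar>x k $ i1\<bar>"
      have ne: "1 + tau \<noteq> 0" "tau + 1 \<noteq> 0" using tau_gt by linarith+
      have e1: "(1-tau)/(1+tau) = 1 - 2*tau/(1+tau)" using ne(1)
        by (simp add: divide_simps)
      have e2: "tau * a\<^sup>2 * (2*w/((tau+1)*a)) = a*w*(2*tau/(1+tau))"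
        using apos ne by (simp add: divide_simps power2_eq_square)
      show ?thesis
        unfolding t_def abs_mult absr w_def[symmetric] e1 e2 by (simp add: algebra_simps)
    qed
    have sumS: "(\<Sum>i\<in>UNIV - {i1}. x (Suc k) $ i) = (\<Sum>i\<in>UNIV - {i1}. x k $ i) - t k * N"
    proof -
      have "(\<Sum>i\<in>UNIV - {i1}. x (Suc k) $ i) = (\<Sum>i\<in>UNIV - {i1}. x k $ i - t k)"
        using x_Suc[of k] dcomp[OF nz] by (intro sum.cong) auto
      also have "\<dots> = (\<Sum>i\<in>UNIV - {i1}. x k $ i) - t k * N"
        using sum_one_minus[of i1] unfolding N_def sum_subtractf by simp
      finally show ?thesis .
    qed
    have gd: "grad f (x k) \<bullet> d k = - (a\<^sup>2 + N)"
      using d_def[of k] gradf(1)[OF nz[of k]] GG[of "x k" "x k"] nz[of k]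
      by (simp add: sgn_mult_self_eq)
    have "f (x (Suc k)) = a * \<bar>?v\<bar> - tau * a\<^sup>2 * t k + (\<Sum>i\<in>UNIV - {i1}. x k $ i) - t k * N"
      using stepx[OF nz[of k]] h1 sumS unfolding f_def by simp
    also have "\<dots> = f (x k) + c1 * t k * (grad f (x k) \<bullet> d k)"
    proof -
      have fx: "f (x k) = a * \<bar>?v\<bar> + (\<Sum>i\<in>UNIV - {i1}. x k $ i)" unfolding f_def by simp
      have "tau * a\<^sup>2 * t k = (c1 * a\<^sup>2 + N * (c1 - 1)) * t k" using tau_a by simp
      then show ?thesis unfolding gd fx by (simp add: algebra_simps)
    qed
    finally show "f (x (Suc k)) = f (x k) + c1 * t k * (grad f (x k) \<bullet> d k)" .
    have sg: "sgn (x (Suc k) $ i1) = - sgn ?v" using stepx[OF nz[of k]] rneg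
      by (simp add: sgn_mult)
    have "grad f (x (Suc k)) \<bullet> d k = a\<^sup>2 - N"
      using d_def[of k] gradf(1)[OF nz[of "Suc k"]] gradf(1)[OF nz[of k]] GG[of "x (Suc k)" "x k"] sg nz[of k]
      by (simp add: sgn_mult_self_eq)
    moreover have "c2 * (grad f (x k) \<bullet> d k) \<le> 0" unfolding gd using c N1 aN
      by (simp add: mult_nonneg_nonpos)
    ultimately show "wolfe f c2 (x k) (d k) (t k)" unfolding wolfe_def
      using x_Suc[of k] gradf(2)[OF nz[of "Suc k"]] aN by simp
  qed
  have part1: "\<forall>k. armijo f c1 (x k) (d k) (t k) \<and> wolfe f c2 (x k) (d k) (t k)"
    using fstep wolfek unfolding armijo_def x_Suc[symmetric] by simp
  have part2: "\<not> bdd_below (range (\<lambda>k. f (x k)))" if tn: "tau \<le> 0"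
  proof
    assume bb: "bdd_below (range (\<lambda>k. f (x k)))"
    then obtain m where m: "\<And>k. m \<le> f (x k)" by (auto simp: bdd_below_def)
    have r1: "\<bar>r\<bar> \<ge> 1" unfolding absr using tn tau_gt by simp
    have grow: "\<bar>x k $ i1\<bar> \<ge> \<bar>x0 $ i1\<bar>" for k
    proof (induction k)
      case 0 then show ?case using x_0 by simp
    next
      case (Suc k)
      have "\<bar>x (Suc k) $ i1\<bar> = \<bar>r\<bar> * \<bar>x k $ i1\<bar>" using stepx[OF nz[of k]] by (simp add: abs_mult)
      also have "\<dots> \<ge> 1 * \<bar>x k $ i1\<bar>" using r1 by (intro mult_right_mono) auto
      finally show ?case using Suc by simp
    qed
    define t0 where "t0 = 2 * \<bar>x0 $ i1\<bar> / ((tau + 1) * a)"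
    have t0pos: "t0 > 0" unfolding t0_def using x0_nz tau_gt apos by simp
    have tge: "t k \<ge> t0" for k unfolding t_def t0_def using grow[of k] tau_gt apos
      by (intro divide_right_mono) auto
    define \<delta> where "\<delta> = c1 * t0 * (a\<^sup>2 + N)"
    have dpos: "\<delta> > 0" unfolding \<delta>_def using c t0pos N1 by (intro mult_pos_pos add_nonneg_pos) auto
    have dec: "f (x (Suc k)) \<le> f (x k) - \<delta>" for k
    proof -
      have "c1 * t0 * (a\<^sup>2 + N) \<le> c1 * t k * (a\<^sup>2 + N)"
        using tge[of k] c N1 by (intro mult_right_mono mult_left_mono) auto
      moreover have gd2: "grad f (x k) \<bullet> d k = - (a\<^sup>2 + N)"
        using d_def[of k] gradf(1)[OF nz[of k]] GG[of "x k" "x k"] nz[of k]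
        by (simp add: sgn_mult_self_eq)
      moreover have "c1 * t k * (grad f (x k) \<bullet> d k) = - (c1 * t k * (a\<^sup>2 + N))"
        unfolding gd2 by (simp only: mult_minus_right)
      ultimately have "c1 * t k * (grad f (x k) \<bullet> d k) \<le> - \<delta>" unfolding \<delta>_def by linarith
      then show ?thesis using fstep[of k] by linarith
    qed
    have bound: "f (x k) \<le> f x0 - real k * \<delta>" for k
    proof (induction k)
      case 0 then show ?case using x_0 by simp
    next
      case (Suc k) then show ?case using dec[of k] by (simp add: algebra_simps)
    qed
    obtain k :: nat where "real k * \<delta> > f x0 - m"
      using reals_Archimedean3[OF dpos] by blast
    then show False using bound[of k] m[of k] by linarith
  qed
  show ?thesis using part1 part2 by blast
qed
end
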